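(* Let $G$ be a finite group and let $M,N$ be normal subgroups with $1<M\le N<G$ such that every $g\in G\setminus N$ is conjugate in $G$ to every element of $gM$. If $x\in G\setminus N$ has order $m$ and $y\in C_M(x)$, then the order of $y$ divides $m$. *)

theory Defs
  imports "HOL-Algebra.Algebra"
begin

definition conjugate_in :: "('a, 'b) monoid_scheme \<Rightarrow> 'a \<Rightarrow> 'a \<Rightarrow> bool" where
  "conjugate_in G a b \<longleftrightarrow> (\<exists>h \<in> carrier G. b = h \<otimes>\<^bsub>G\<^esub> a \<otimes>\<^bsub>G\<^esub> inv\<^bsub>G\<^esub> h)"

definition centralizer_in :: "('a, 'b) monoid_scheme \<Rightarrow> 'a set \<Rightarrow> 'a \<Rightarrow> 'a set" where
  "centralizer_in G M x = {y \<in> M. x \<otimes>\<^bsub>G\<^esub> y = y \<otimes>\<^bsub>G\<^esub> x}"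

end

theory Submission
  imports Defs
begin

lemma (in group) conj_pow:
  assumes "h \<in> carrier G" "a \<in> carrier G"
  shows "(h \<otimes> a \<otimes> inv h) [^] (n::nat) = h \<otimes> a [^] n \<otimes> inv h"
proof (induct n)
  case 0 then show ?case using assms by simp
next
  case (Suc n)
  have "(h \<otimes> a \<otimes> inv h) [^] Suc n = (h \<otimes> a [^] n \<otimes> inv h) \<otimes> (h \<otimes> a \<otimes> inv h)"
    using Suc by simp
  also have "\<dots> = h \<otimes> (a [^] n \<otimes> a) \<otimes> inv h"
    using assms by (simp add: m_assoc flip: m_assoc[of "inv h" h])
  finally show ?case by simp
qed

theorem mainTheorem12:
  fixes G (structure) and M N :: "'a set" and x y :: 'a
  assumes "group G" and "finite (carrier G)"
    and "M \<lhd> G" and "N \<lhd> G"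
    and "M \<noteq> {\<one>}" and "M \<subseteq> N" and "N \<noteq> carrier G"
    and "\<forall>g \<in> carrier G - N. \<forall>g' \<in> g <# M. conjugate_in G g g'"
    and "x \<in> carrier G - N" and "y \<in> centralizer_in G M x"
  shows "group.ord G y dvd group.ord G x"
proof -
  interpret group G by fact
  have Msub: "M \<subseteq> carrier G" using assms(3) by (simp add: normal_def subgroup_def)
  have yM: "y \<in> M" and comm: "x \<otimes> y = y \<otimes> x" using assms(10) by (auto simp: centralizer_in_def)
  have yc: "y \<in> carrier G" using yM Msub by auto
  have xc: "x \<in> carrier G" using assms(9) by auto
  have "x \<otimes> y \<in> x <# M" using yM by (auto simp: l_coset_def)
  then have "conjugate_in G x (x \<otimes> y)" using assms(8,9) by blast
  then obtain h where h: "h \<in> carrier G" "x \<otimes> y = h \<otimes> x \<otimes> inv h"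
    by (auto simp: conjugate_in_def)
  let ?m = "ord x"
  have "(x \<otimes> y) [^] ?m = \<one>"
    using h xc by (simp add: conj_pow)
  moreover have "(x \<otimes> y) [^] ?m = x [^] ?m \<otimes> y [^] ?m"
    using pow_mult_distrib[OF comm xc yc] .
  ultimately have "y [^] ?m = \<one>" using xc yc by simp
  then show ?thesis using pow_eq_id[OF yc] by simp
qed

end
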